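(* Let $X,Y$ be jointly Gaussian centred random variables with common variance $\sigma^2$ and correlation $c$, and let $r>0$. Then as $c\to-1$ (with $\sigma$ fixed), $$\operatorname{E}\big((X^+Y^+)^r\big)\simeq K_r\,\sigma^{-2(1+r)}\big(\det\operatorname{Var}(X,Y)\big)^{(2r+1)/2},\qquad K_r:=\frac1{2\pi}\int_0^\infty\!\!\int_0^\infty x^ry^r\exp\Big(-\frac{(x+y)^2}{2}\Big)dx\,dy<\infty,$$ and $K_1=\frac1{6\pi}$. Moreover, as $c\to-1$, $\operatorname{E}(X^+Y^-)\simeq\frac{\sigma^2}{2}$.
   Context: $z^+=\max(0,z)$, $z^-=-\min(0,z)$. *)

theory Defs
  imports "HOL-Probability.Probability"
begin

definition pos_part :: "real \<Rightarrow> real" where "pos_part z = max 0 z"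
definition neg_part :: "real \<Rightarrow> real" where "neg_part z = - min 0 z"

text \<open>Density of a centred bivariate Gaussian vector (X,Y) with Var X = Var Y = sigma^2
  and correlation c (|c| < 1), i.e. covariance matrix [[s^2, c s^2],[c s^2, s^2]].\<close>
definition binormal_density :: "real \<Rightarrow> real \<Rightarrow> real \<times> real \<Rightarrow> real" where
  "binormal_density \<sigma> c = (\<lambda>(x, y).
     exp (- (x^2 - 2 * c * x * y + y^2) / (2 * \<sigma>^2 * (1 - c^2)))
       / (2 * pi * \<sigma>^2 * sqrt (1 - c^2)))"

definition K_const :: "real \<Rightarrow> real" where
  "K_const r = (1 / (2 * pi)) *
     (LINT p : {0<..} \<times> {0<..} | (lborel :: (real \<times> real) measure).
        (fst p) powr r * (snd p) powr r * exp (- ((fst p + snd p)^2) / 2))"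

end

theory Submission
  imports Defs
begin

lemma pos_part_meas[measurable]: "pos_part \<in> borel_measurable borel"
  unfolding pos_part_def by measurable
lemma neg_part_meas[measurable]: "neg_part \<in> borel_measurable borel"
  unfolding neg_part_def by measurable

lemma fst_borel[measurable]: "(fst :: real\<times>real \<Rightarrow> real) \<in> borel_measurable borel"
  by (intro borel_measurable_continuous_onI continuous_on_fst continuous_on_id)
lemma snd_borel[measurable]: "(snd :: real\<times>real \<Rightarrow> real) \<in> borel_measurable borel"
  by (intro borel_measurable_continuous_onI continuous_on_snd continuous_on_id)

lemma lin_subst_nn:
  fixes F :: "real \<times> real \<Rightarrow> ennreal" and a b d :: real
  assumes Fm[measurable]: "F \<in> borel_measurable borel" and a: "a \<noteq> 0" and d: "d \<noteq> 0"
  shows "(\<integral>\<^sup>+p. F p \<partial>lborel) = ennreal (\<bar>a\<bar> * \<bar>d\<bar>) * (\<integral>\<^sup>+p. F (a * fst p, b * fst p + d * snd p) \<partial>lborel)"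
proof -
  have Fm2: "F \<in> borel_measurable (lborel \<Otimes>\<^sub>M lborel)"
    by (simp add: lborel_prod)
  have Gm[measurable]: "(\<lambda>x. \<integral>\<^sup>+y. F (x, y) \<partial>lborel) \<in> borel_measurable borel"
    using lborel.borel_measurable_nn_integral_fst[OF Fm2] by (simp add: measurable_lborel1)
  have H: "(\<lambda>p. F (a * fst p, b * fst p + d * snd p)) \<in> borel_measurable (lborel \<Otimes>\<^sub>M lborel)"
  proof -
    have T: "(\<lambda>p::real\<times>real. (a * fst p, b * fst p + d * snd p)) \<in> borel_measurable borel"
      by (intro borel_measurable_continuous_onI continuous_intros)
    show ?thesis unfolding lborel_prod using measurable_comp[OF T Fm] by (simp add: comp_def)
  qed
  have "(\<integral>\<^sup>+p. F p \<partial>lborel) = (\<integral>\<^sup>+p. F p \<partial>(lborel \<Otimes>\<^sub>M lborel))"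
    by (simp add: lborel_prod)
  also have "\<dots> = (\<integral>\<^sup>+x. \<integral>\<^sup>+y. F (x, y) \<partial>lborel \<partial>lborel)"
    by (rule lborel.nn_integral_fst[OF Fm2, symmetric])
  also have "\<dots> = ennreal \<bar>a\<bar> * (\<integral>\<^sup>+u. (\<integral>\<^sup>+y. F (0 + a * u, y) \<partial>lborel) \<partial>lborel)"
    by (rule nn_integral_real_affine[OF Gm a])
  also have "(\<lambda>u. (\<integral>\<^sup>+y. F (0 + a * u, y) \<partial>lborel)) = (\<lambda>u. ennreal \<bar>d\<bar> * (\<integral>\<^sup>+w. F (a * u, b * u + d * w) \<partial>lborel))"
  proof
    fix u
    show "(\<integral>\<^sup>+y. F (0 + a * u, y) \<partial>lborel) = ennreal \<bar>d\<bar> * (\<integral>\<^sup>+w. F (a * u, b * u + d * w) \<partial>lborel)"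
      by (simp, rule nn_integral_real_affine[OF _ d]) measurable
  qed
  also have "ennreal \<bar>a\<bar> * (\<integral>\<^sup>+u. ennreal \<bar>d\<bar> * (\<integral>\<^sup>+w. F (a * u, b * u + d * w) \<partial>lborel) \<partial>lborel)
     = ennreal \<bar>a\<bar> * (ennreal \<bar>d\<bar> * (\<integral>\<^sup>+u. (\<integral>\<^sup>+w. F (a * u, b * u + d * w) \<partial>lborel) \<partial>lborel))"
    by (subst nn_integral_cmult) (use lborel.borel_measurable_nn_integral_fst[OF H] in \<open>auto simp: measurable_lborel1\<close>)
  also have "(\<integral>\<^sup>+u. (\<integral>\<^sup>+w. F (a * u, b * u + d * w) \<partial>lborel) \<partial>lborel) = (\<integral>\<^sup>+p. F (a * fst p, b * fst p + d * snd p) \<partial>(lborel \<Otimes>\<^sub>M lborel))"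
    using lborel.nn_integral_fst[OF H] by simp
  finally show ?thesis by (simp add: lborel_prod ennreal_mult mult.assoc)
qed

lemma nn_prod:
  fixes f g :: "real \<Rightarrow> ennreal"
  assumes [measurable]: "f \<in> borel_measurable borel" "g \<in> borel_measurable borel"
  shows "(\<integral>\<^sup>+p. f (fst p) * g (snd p) \<partial>lborel) = (\<integral>\<^sup>+x. f x \<partial>lborel) * (\<integral>\<^sup>+y. g y \<partial>lborel)"
proof -
  have H: "(\<lambda>p. f (fst p) * g (snd p)) \<in> borel_measurable (lborel \<Otimes>\<^sub>M lborel)"
    by measurable
  have "(\<integral>\<^sup>+p. f (fst p) * g (snd p) \<partial>lborel) = (\<integral>\<^sup>+p. f (fst p) * g (snd p) \<partial>(lborel \<Otimes>\<^sub>M lborel))"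
    by (simp add: lborel_prod)
  also have "\<dots> = (\<integral>\<^sup>+x. \<integral>\<^sup>+y. f x * g y \<partial>lborel \<partial>lborel)"
    using lborel.nn_integral_fst[OF H] by simp
  also have "\<dots> = (\<integral>\<^sup>+x. f x * (\<integral>\<^sup>+y. g y \<partial>lborel) \<partial>lborel)"
    by (subst nn_integral_cmult) auto
  also have "\<dots> = (\<integral>\<^sup>+x. f x \<partial>lborel) * (\<integral>\<^sup>+y. g y \<partial>lborel)"
    by (subst nn_integral_multc) auto
  finally show ?thesis .
qed

lemma integrable_prod:
  fixes f g :: "real \<Rightarrow> real"
  assumes f: "integrable lborel f" and g: "integrable lborel g"
  shows "integrable lborel (\<lambda>p::real\<times>real. f (fst p) * g (snd p))"
proof -
  have [measurable]: "f \<in> borel_measurable borel" "g \<in> borel_measurable borel"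
    using f g by (auto dest: borel_measurable_integrable)
  have "(\<integral>\<^sup>+p. ennreal (norm (f (fst p) * g (snd p))) \<partial>(lborel::(real\<times>real) measure))
     = (\<integral>\<^sup>+p. ennreal (norm (f (fst p))) * ennreal (norm (g (snd p))) \<partial>lborel)"
    by (simp add: ennreal_mult abs_mult)
  also have "\<dots> = (\<integral>\<^sup>+x. ennreal (norm (f x)) \<partial>lborel) * (\<integral>\<^sup>+y. ennreal (norm (g y)) \<partial>lborel)"
    by (rule nn_prod) measurable
  also have "\<dots> < \<infinity>"
    using f g unfolding integrable_iff_bounded by (simp add: ennreal_mult_less_top)
  finally show ?thesis unfolding integrable_iff_bounded by (simp add: measurable_lborel1) measurable
qed

lemma integral_prod:
  fixes f g :: "real \<Rightarrow> real"
  assumes f: "integrable lborel f" and g: "integrable lborel g"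
    and fn: "\<And>x. 0 \<le> f x" and gn: "\<And>x. 0 \<le> g x"
  shows "(\<integral>p. f (fst p) * g (snd p) \<partial>(lborel::(real\<times>real) measure)) = (\<integral>x. f x \<partial>lborel) * (\<integral>y. g y \<partial>lborel)"
proof -
  have [measurable]: "f \<in> borel_measurable borel" "g \<in> borel_measurable borel"
    using f g by (auto dest: borel_measurable_integrable)
  have "(\<integral>p. f (fst p) * g (snd p) \<partial>(lborel::(real\<times>real) measure))
      = enn2real (\<integral>\<^sup>+p. ennreal (f (fst p) * g (snd p)) \<partial>lborel)"
    by (rule integral_eq_nn_integral) (auto simp: fn gn measurable_lborel1)
  also have "(\<integral>\<^sup>+p. ennreal (f (fst p) * g (snd p)) \<partial>(lborel::(real\<times>real) measure))
     = (\<integral>\<^sup>+p. ennreal (f (fst p)) * ennreal (g (snd p)) \<partial>lborel)"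
    by (simp add: ennreal_mult fn gn)
  also have "\<dots> = (\<integral>\<^sup>+x. ennreal (f x) \<partial>lborel) * (\<integral>\<^sup>+y. ennreal (g y) \<partial>lborel)"
    by (rule nn_prod) measurable
  finally show ?thesis
    by (simp add: enn2real_mult integral_eq_nn_integral fn gn)
qed

lemma dc_at_right:
  fixes s :: "real \<Rightarrow> 'a \<Rightarrow> real" and w f :: "'a \<Rightarrow> real"
  assumes ab: "a < b" and sm: "\<And>t. t \<in> {a<..<b} \<Longrightarrow> s t \<in> borel_measurable M"
    and w: "integrable M w" and fm: "f \<in> borel_measurable M"
    and lim: "\<And>x. x \<in> space M \<Longrightarrow> ((\<lambda>t. s t x) \<longlongrightarrow> f x) (at_right a)"
    and bnd: "\<And>t x. t \<in> {a<..<b} \<Longrightarrow> x \<in> space M \<Longrightarrow> \<bar>s t x\<bar> \<le> w x"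
  shows "((\<lambda>t. integral\<^sup>L M (s t)) \<longlongrightarrow> integral\<^sup>L M f) (at_right a)"
proof (rule tendsto_at_right_sequentially[OF ab])
  fix S :: "nat \<Rightarrow> real"
  assume S1: "\<And>n. a < S n" and S2: "\<And>n. S n < b" and "decseq S" and S3: "S \<longlonglongrightarrow> a"
  have Sf: "filterlim S (at_right a) sequentially"
    using S1 S3 by (auto intro!: tendsto_imp_filterlim_at_right eventuallyI)
  show "(\<lambda>n. integral\<^sup>L M (s (S n))) \<longlonglongrightarrow> integral\<^sup>L M f"
  proof (rule integral_dominated_convergence[OF fm _ w])
    show "\<And>i. s (S i) \<in> borel_measurable M" using S1 S2 by (intro sm) auto
    show "AE x in M. (\<lambda>i. s (S i) x) \<longlonglongrightarrow> f x"
      by (intro AE_I2 filterlim_compose[OF lim Sf])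
    show "\<And>i. AE x in M. norm (s (S i) x) \<le> w x"
      using S1 S2 bnd by (intro AE_I2) auto
  qed
qed



definition hh :: "real \<Rightarrow> real \<Rightarrow> real \<times> real \<Rightarrow> real" where
  "hh r c p = (pos_part (fst p) * pos_part (snd p)) powr r *
     exp (- ((fst p)^2 - 2 * c * fst p * snd p + (snd p)^2) / 2)"

definition gg :: "real \<Rightarrow> real \<Rightarrow> real" where
  "gg r u = pos_part u powr r * exp (- (u ^ 2) / 2)"

lemma hh_meas[measurable]: "hh r c \<in> borel_measurable borel"
  unfolding hh_def by measurable

lemma gg_meas[measurable]: "gg r \<in> borel_measurable borel"
  unfolding gg_def by measurable

lemma pos_part_nonneg: "0 \<le> pos_part x" by (simp add: pos_part_def)
lemma neg_part_nonneg: "0 \<le> neg_part x" by (simp add: neg_part_def)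

lemma hh_nonneg: "0 \<le> hh r c p"
  unfolding hh_def by simp

lemma hh_zero: "hh r 0 p = gg r (fst p) * gg r (snd p)"
  unfolding hh_def gg_def
  by (simp add: powr_mult field_simps flip: exp_add)

lemma hh_le: assumes "c \<le> 0" "r > 0" shows "hh r c p \<le> hh r 0 p"
proof (cases "fst p > 0 \<and> snd p > 0")
  case True
  then have "c * fst p * snd p \<le> 0" using assms
    by (simp add: mult_nonpos_nonneg)
  then have "exp (- ((fst p)^2 - 2 * c * fst p * snd p + (snd p)^2) / 2) \<le> exp (- ((fst p)^2 - 2 * 0 * fst p * snd p + (snd p)^2) / 2)"
    by simp
  then show ?thesis unfolding hh_def
    by (intro mult_left_mono) auto
next
  case False
  then have e: "pos_part (fst p) * pos_part (snd p) = 0"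
    by (auto simp: pos_part_def)
  show ?thesis unfolding hh_def e using \<open>r > 0\<close> by simp
qed

lemma gg_integrable: assumes r: "r > 0" shows "integrable lborel (gg r)"
proof -
  define k where "k = nat \<lceil>r\<rceil>"
  have rk: "r \<le> real k" unfolding k_def by linarith
  let ?f = "\<lambda>u. sqrt (2 * pi) * (std_normal_density u + std_normal_density u * \<bar>u\<bar> ^ k)"
  have fi: "integrable lborel ?f"
    by (intro integrable_mult_right Bochner_Integration.integrable_add integrable_std_normal_moment_abs integrable_normal_density) simp_all
  show ?thesis
  proof (rule Bochner_Integration.integrable_bound[OF fi])
    show "gg r \<in> borel_measurable lborel" by (simp add: measurable_lborel1)
    show "AE x in lborel. norm (gg r x) \<le> norm (?f x)"
    proof (rule AE_I2)
      fix u :: real assume "u \<in> space lborel"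
      have pb: "pos_part u powr r \<le> 1 + \<bar>u\<bar> ^ k"
      proof (cases "u \<le> 0")
        case True then show ?thesis by (simp add: pos_part_def)
      next
        case False
        then have pu: "pos_part u = u" by (simp add: pos_part_def)
        show ?thesis
        proof (cases "u \<le> 1")
          case True
          then have "u powr r \<le> 1" using False r by (intro powr_le1) auto
          moreover have "0 \<le> \<bar>u\<bar> ^ k" by simp
          ultimately show ?thesis unfolding pu by linarith
        next
          case F2: False
          then have "u powr r \<le> u powr (real k)" using rk by (intro powr_mono) auto
          also have "\<dots> = \<bar>u\<bar> ^ k" using False by (simp add: powr_realpow)
          finally show ?thesis using pu by simp
        qed
      qed
      have "std_normal_density u * sqrt (2 * pi) = exp (- (u ^ 2) / 2)"
        by (simp add: std_normal_density_def)
      have "gg r u \<le> (1 + \<bar>u\<bar> ^ k) * exp (- (u ^ 2) / 2)"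
        unfolding gg_def using pb by (intro mult_right_mono) auto
      also have "\<dots> = ?f u"
        unfolding \<open>std_normal_density u * sqrt (2 * pi) = exp (- (u ^ 2) / 2)\<close>[symmetric]
        by (simp add: algebra_simps)
      finally have "gg r u \<le> ?f u" .
      moreover have "0 \<le> gg r u" by (simp add: gg_def)
      moreover have "0 \<le> ?f u" by simp
      ultimately show "norm (gg r u) \<le> norm (?f u)" by simp
    qed
  qed
qed


lemma metis_aux_inv_lt: "inverse (2::ennreal) < \<top>"
  by (metis ennreal_numeral inverse_ennreal ennreal_less_top zero_less_numeral)

lemma hh_integrable: assumes "r > 0" "c \<le> 0" shows "integrable lborel (hh r c)"
proof (rule Bochner_Integration.integrable_bound)
  show "integrable lborel (hh r 0)"
    unfolding hh_zero using integrable_prod[OF gg_integrable gg_integrable] assms by simp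
  show "hh r c \<in> borel_measurable lborel" by (simp add: measurable_lborel1)
  show "AE x in lborel. norm (hh r c x) \<le> norm (hh r 0 x)"
    using hh_le[OF assms(2,1)] hh_nonneg by (intro AE_I2) auto
qed

lemma Kfun_eq:
  assumes "r > 0"
  shows "indicator ({0<..} \<times> {0<..}) p *\<^sub>R ((fst p) powr r * (snd p) powr r * exp (- ((fst p + snd p)^2) / 2)) = hh r (-1) p"
proof (cases "fst p > 0 \<and> snd p > 0")
  case True
  then have "pos_part (fst p) = fst p" "pos_part (snd p) = snd p" by (auto simp: pos_part_def)
  moreover have "(fst p)^2 - 2 * (-1) * fst p * snd p + (snd p)^2 = (fst p + snd p)^2"
    by (simp add: power2_eq_square algebra_simps)
  ultimately show ?thesis using True unfolding hh_def
    by (simp add: powr_mult indicator_def mem_Times_iff)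
next
  case False
  then have e: "pos_part (fst p) * pos_part (snd p) = 0"
    by (auto simp: pos_part_def)
  show ?thesis unfolding hh_def e using False assms by (auto simp: indicator_def mem_Times_iff)
qed

lemma part1:
  assumes "r > 0"
  shows "set_integrable (lborel :: (real \<times> real) measure) ({0<..} \<times> {0<..})
           (\<lambda>p. (fst p) powr r * (snd p) powr r * exp (- ((fst p + snd p)^2) / 2))"
  unfolding set_integrable_def Kfun_eq[OF assms] using hh_integrable[OF assms] by simp

lemma K_eq: assumes "r > 0" shows "K_const r = (1 / (2 * pi)) * (\<integral>p. hh r (-1) p \<partial>lborel)"
  unfolding K_const_def set_lebesgue_integral_def Kfun_eq[OF assms] ..

lemma J_pos: assumes r: "r > 0" shows "(\<integral>p. hh r (-1) p \<partial>lborel) > 0"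
proof -
  define B :: "real set" where "B = {1/2..1}"
  define k where "k = (1/4) powr r * exp (-2)"
  have k: "k > 0" unfolding k_def by simp
  have ib: "integrable lborel (indicator B :: real \<Rightarrow> real)"
    unfolding B_def by (intro integrable_real_indicator)
      (auto simp add: metis_aux_inv_lt)
  have mb: "(\<integral>x. indicator B x \<partial>lborel) = (1/2::real)"
    unfolding B_def by simp
  have le: "k * (indicator B (fst p) * indicator B (snd p)) \<le> hh r (-1) p" for p
  proof (cases "fst p \<in> B \<and> snd p \<in> B")
    case True
    then have x: "1/2 \<le> fst p" "fst p \<le> 1" and y: "1/2 \<le> snd p" "snd p \<le> 1" by (auto simp: B_def)
    then have pp: "pos_part (fst p) = fst p" "pos_part (snd p) = snd p" by (auto simp: pos_part_def)
    have "1/4 \<le> fst p * snd p" using x y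
      using mult_mono[OF x(1) y(1)] by simp
    then have a: "(1/4) powr r \<le> (fst p * snd p) powr r" using r by (intro powr_mono2) auto
    have "(fst p)^2 - 2 * (-1) * fst p * snd p + (snd p)^2 = (fst p + snd p)^2"
      by (simp add: power2_eq_square algebra_simps)
    moreover have "(fst p + snd p)^2 \<le> 2^2" using x y by (intro power_mono) auto
    ultimately have b: "exp (-2) \<le> exp (- ((fst p)^2 - 2 * (-1) * fst p * snd p + (snd p)^2) / 2)"
      by simp
    have "k \<le> hh r (-1) p" unfolding k_def hh_def pp
      by (intro mult_mono a b) auto
    then show ?thesis using True by simp
  next
    case False
    then show ?thesis using hh_nonneg[of r "-1" p] by (auto simp: indicator_def)
  qed
  have "(\<integral>p. k * (indicator B (fst p) * indicator B (snd p)) \<partial>(lborel::(real\<times>real) measure)) \<le> (\<integral>p. hh r (-1) p \<partial>lborel)"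
    by (intro integral_mono integrable_mult_right integrable_prod ib hh_integrable r le) auto
  moreover have "(\<integral>p. k * (indicator B (fst p) * indicator B (snd p)) \<partial>(lborel::(real\<times>real) measure)) = k * (1 / 4)"
  proof -
    have "(\<integral>p. indicator B (fst p) * indicator B (snd p) \<partial>(lborel::(real\<times>real) measure))
        = (\<integral>x. indicator B x \<partial>lborel) * (\<integral>x. indicator B x \<partial>lborel :: real)"
    proof -
      have n: "\<And>x. 0 \<le> (indicator B x::real)" by simp
      note integral_prod[OF ib ib n n]
      then show ?thesis by (simp only:)
    qed
    then have "(\<integral>p. indicator B (fst p) * indicator B (snd p) \<partial>(lborel::(real\<times>real) measure)) = (1 / 4 :: real)"
      unfolding mb by simp
    then show ?thesis by (simp only: integral_mult_right_zero)
  qed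
  ultimately have "k * (1 / 4) \<le> (\<integral>p. hh r (-1) p \<partial>lborel)" by linarith
  moreover have "k * (1 / 4) > 0" using k by simp
  ultimately show ?thesis by linarith
qed

lemma J_lim: assumes r: "r > 0"
  shows "((\<lambda>c. \<integral>p. hh r c p \<partial>lborel) \<longlongrightarrow> (\<integral>p. hh r (-1) p \<partial>lborel)) (at_right (-1))"
proof (rule dc_at_right[where b=0 and w="hh r 0"])
  show "integrable lborel (hh r 0)" using hh_integrable r by simp
  show "\<And>t. t \<in> {- 1<..<0} \<Longrightarrow> hh r t \<in> borel_measurable lborel" by (simp add: measurable_lborel1)
  show "hh r (- 1) \<in> borel_measurable lborel" by (simp add: measurable_lborel1)
  show "((\<lambda>t. hh r t x) \<longlongrightarrow> hh r (- 1) x) (at_right (- 1))" for x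
    unfolding hh_def by (intro tendsto_intros) auto
  show "\<bar>hh r t x\<bar> \<le> hh r 0 x" if "t \<in> {- 1<..<0}" for t x
    using hh_le[of t r x] hh_nonneg[of r t x] that r by auto
qed simp



lemma binormal_meas[measurable]: "binormal_density \<sigma> c \<in> borel_measurable borel"
  unfolding binormal_density_def by (simp add: split_beta') measurable

lemma binormal_nonneg: assumes "c \<in> {-1<..<1}" shows "0 \<le> binormal_density \<sigma> c p"
proof -
  have "c^2 \<le> 1" using assms by (auto simp: abs_square_le_1 abs_le_iff)
  then show ?thesis
    unfolding binormal_density_def by (auto simp: split_beta' intro!: divide_nonneg_nonneg)
qed

lemma E_as_nn:
  assumes d: "distributed M (lborel :: (real \<times> real) measure) (\<lambda>\<omega>. (X \<omega>, Y \<omega>)) (\<lambda>p. ennreal (binormal_density \<sigma> c p))"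
    and Gm[measurable]: "G \<in> borel_measurable borel" and Gn: "\<And>p. 0 \<le> G p" and c: "c \<in> {-1<..<1}"
  shows "(\<integral>\<omega>. G (X \<omega>, Y \<omega>) \<partial>M) = enn2real (\<integral>\<^sup>+p. ennreal (binormal_density \<sigma> c p * G p) \<partial>lborel)"
proof -
  have "(\<integral>\<omega>. G (X \<omega>, Y \<omega>) \<partial>M) = (\<integral>p. binormal_density \<sigma> c p * G p \<partial>lborel)"
    by (rule distributed_integral[OF d, symmetric]) (auto simp: binormal_nonneg[OF c] measurable_lborel1)
  also have "\<dots> = enn2real (\<integral>\<^sup>+p. ennreal (binormal_density \<sigma> c p * G p) \<partial>lborel)"
    by (rule integral_eq_nn_integral) (auto simp: binormal_nonneg[OF c] Gn measurable_lborel1)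
  finally show ?thesis .
qed

lemma pos_part_scale: "a > 0 \<Longrightarrow> pos_part (a * x) = a * pos_part x"
  by (auto simp: pos_part_def max_def mult_le_0_iff zero_le_mult_iff)
lemma neg_part_scale: "a > 0 \<Longrightarrow> neg_part (a * x) = a * neg_part x"
  by (auto simp: neg_part_def min_def mult_le_0_iff zero_le_mult_iff)

definition CC :: "real \<Rightarrow> real \<Rightarrow> real \<Rightarrow> real" where
  "CC \<sigma> r c = \<sigma> powr (2 * r) * (1 - c^2) powr r * sqrt (1 - c^2) / (2 * pi)"

lemma pw2:
  assumes \<sigma>: "\<sigma> > 0" and c: "c \<in> {-1<..<1}"
  shows "(\<sigma> * sqrt (1 - c^2)) * (\<sigma> * sqrt (1 - c^2)) *
     (binormal_density \<sigma> c (\<sigma> * sqrt (1 - c^2) * u, 0 * u + \<sigma> * sqrt (1 - c^2) * v) *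
      (pos_part (\<sigma> * sqrt (1 - c^2) * u) * pos_part (0 * u + \<sigma> * sqrt (1 - c^2) * v)) powr r)
   = CC \<sigma> r c * hh r c (u, v)"
proof -
  define s where "s = sqrt (1 - c^2)"
  have c2: "c^2 < 1" using c by (auto simp: abs_square_less_1 abs_less_iff)
  have s: "s > 0" unfolding s_def using c2 by simp
  have ss: "s * s = 1 - c^2" unfolding s_def using c2 by simp
  define a where "a = \<sigma> * s"
  have a: "a > 0" unfolding a_def using s \<sigma> by simp
  have aa: "a * a = \<sigma>^2 * (1 - c^2)" unfolding a_def ss[symmetric] by (simp add: power2_eq_square algebra_simps)
  have e1: "(pos_part (a * u) * pos_part (a * v)) powr r = (a * a) powr r * (pos_part u * pos_part v) powr r"
    using a by (simp add: pos_part_scale powr_mult[symmetric] algebra_simps)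
  have e2: "(a * a) powr r = \<sigma> powr (2 * r) * (1 - c^2) powr r"
  proof -
    have "\<sigma>^2 = \<sigma> powr 2" using powr_realpow[OF \<sigma>, of 2] by simp
    then show ?thesis unfolding aa by (simp add: powr_mult powr_powr)
  qed
  have e3: "((a * u)^2 - 2 * c * (a * u) * (a * v) + (a * v)^2) / (2 * \<sigma>^2 * (1 - c^2))
       = (u^2 - 2 * c * u * v + v^2) / 2"
  proof -
    have "((a * u)^2 - 2 * c * (a * u) * (a * v) + (a * v)^2) = (a * a) * (u^2 - 2 * c * u * v + v^2)"
      by (simp add: power2_eq_square algebra_simps)
    then show ?thesis unfolding aa using \<sigma> c2 by (simp add: field_simps)
  qed
  have e3': "- ((a * u)^2 - 2 * c * (a * u) * (a * v) + (a * v)^2) / (2 * \<sigma>^2 * (1 - c^2))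
       = - (u^2 - 2 * c * u * v + v^2) / 2"
    by (metis e3 minus_divide_left)
  have e4: "binormal_density \<sigma> c (a * u, a * v) = exp (- (u^2 - 2 * c * u * v + v^2) / 2) / (2 * pi * \<sigma>^2 * s)"
    unfolding binormal_density_def prod.case e3' s_def[symmetric] ..
  have aa2: "a * a = \<sigma>^2 * (s * s)" unfolding a_def by (simp add: power2_eq_square)
  have fin: "a * a * (binormal_density \<sigma> c (a * u, a * v) * (pos_part (a * u) * pos_part (a * v)) powr r)
     = s / (2 * pi) * (\<sigma> powr (2 * r) * (1 - c^2) powr r) * hh r c (u, v)"
    unfolding e4 e1 e2 hh_def unfolding aa2 using \<sigma> s by (simp add: field_simps power2_eq_square)
  have as: "\<sigma> * sqrt (1 - c^2) = a" unfolding a_def s_def ..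
  show ?thesis unfolding as mult_zero_left add_0 fin CC_def s_def by (simp add: field_simps)
qed



lemma E2:
  assumes \<sigma>: "\<sigma> > 0" and r: "r > 0" and c: "c \<in> {-1<..<1}"
    and d: "distributed M (lborel :: (real \<times> real) measure) (\<lambda>\<omega>. (X \<omega>, Y \<omega>)) (\<lambda>p. ennreal (binormal_density \<sigma> c p))"
  shows "(\<integral>\<omega>. (pos_part (X \<omega>) * pos_part (Y \<omega>)) powr r \<partial>M) = CC \<sigma> r c * (\<integral>p. hh r c p \<partial>lborel)"
proof -
  define a where "a = \<sigma> * sqrt (1 - c^2)"
  have c2: "c^2 < 1" using c by (auto simp: abs_square_less_1 abs_less_iff)
  have a: "a > 0" unfolding a_def using \<sigma> c2 by simp
  have CCn: "0 \<le> CC \<sigma> r c" unfolding CC_def using c2 by simp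
  define G where "G = (\<lambda>p::real\<times>real. (pos_part (fst p) * pos_part (snd p)) powr r)"
  have Gm[measurable]: "G \<in> borel_measurable borel" unfolding G_def by measurable
  have "(\<integral>\<omega>. (pos_part (X \<omega>) * pos_part (Y \<omega>)) powr r \<partial>M) = (\<integral>\<omega>. G (X \<omega>, Y \<omega>) \<partial>M)"
    unfolding G_def by simp
  also have "\<dots> = enn2real (\<integral>\<^sup>+p. ennreal (binormal_density \<sigma> c p * G p) \<partial>lborel)"
    by (rule E_as_nn[OF d Gm _ c]) (simp add: G_def)
  also have "(\<integral>\<^sup>+p. ennreal (binormal_density \<sigma> c p * G p) \<partial>lborel)
     = ennreal (\<bar>a\<bar> * \<bar>a\<bar>) * (\<integral>\<^sup>+q. ennreal (binormal_density \<sigma> c (a * fst q, 0 * fst q + a * snd q) * G (a * fst q, 0 * fst q + a * snd q)) \<partial>lborel)"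
    by (rule lin_subst_nn) (use a in auto)
  also have "\<dots> = (\<integral>\<^sup>+q. ennreal (a * a * (binormal_density \<sigma> c (a * fst q, 0 * fst q + a * snd q) * G (a * fst q, 0 * fst q + a * snd q))) \<partial>lborel)"
    using a by (subst nn_integral_cmult[symmetric]) (auto simp: ennreal_mult[symmetric] binormal_nonneg[OF c] G_def)
  also have "\<dots> = (\<integral>\<^sup>+q. ennreal (CC \<sigma> r c * hh r c q) \<partial>lborel)"
  proof (rule nn_integral_cong)
    fix q :: "real \<times> real"
    obtain u v where q: "q = (u, v)" by (cases q)
    show "ennreal (a * a * (binormal_density \<sigma> c (a * fst q, 0 * fst q + a * snd q) * G (a * fst q, 0 * fst q + a * snd q))) = ennreal (CC \<sigma> r c * hh r c q)"
      unfolding q a_def G_def using pw2[OF \<sigma> c, of u v r] by simp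
  qed
  also have "\<dots> = ennreal (CC \<sigma> r c) * (\<integral>\<^sup>+q. ennreal (hh r c q) \<partial>lborel)"
    using CCn by (subst nn_integral_cmult[symmetric]) (auto simp: ennreal_mult hh_nonneg)
  finally have "(\<integral>\<omega>. (pos_part (X \<omega>) * pos_part (Y \<omega>)) powr r \<partial>M) = CC \<sigma> r c * enn2real (\<integral>\<^sup>+q. ennreal (hh r c q) \<partial>lborel)"
    using CCn by (simp add: enn2real_mult)
  also have "enn2real (\<integral>\<^sup>+q. ennreal (hh r c q) \<partial>lborel) = (\<integral>p. hh r c p \<partial>lborel)"
    by (rule integral_eq_nn_integral[symmetric]) (auto simp: hh_nonneg measurable_lborel1)
  finally show ?thesis .
qed

lemma denom_eq:
  assumes \<sigma>: "\<sigma> > 0" and c: "c \<in> {-1<..<1}"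
  shows "K * \<sigma> powr (- 2 * (1 + r)) * (\<sigma>^2 * \<sigma>^2 - (c * \<sigma>^2) * (c * \<sigma>^2)) powr ((2 * r + 1) / 2)
       = K * (2 * pi) * CC \<sigma> r c"
proof -
  have c2: "c^2 < 1" using c by (auto simp: abs_square_less_1 abs_less_iff)
  have "\<sigma>^2 * \<sigma>^2 - (c * \<sigma>^2) * (c * \<sigma>^2) = \<sigma> powr 4 * (1 - c^2)"
  proof -
    have "\<sigma> powr 4 = \<sigma>^4" using powr_realpow[OF \<sigma>, of 4] by simp
    then show ?thesis by (simp add: power2_eq_square algebra_simps power4_eq_xxxx)
  qed
  then have "(\<sigma>^2 * \<sigma>^2 - (c * \<sigma>^2) * (c * \<sigma>^2)) powr ((2 * r + 1) / 2)
      = \<sigma> powr (4 * ((2 * r + 1) / 2)) * ((1 - c^2) powr r * (1 - c^2) powr (1/2))"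
    by (simp add: powr_mult powr_powr powr_add[symmetric] add_divide_distrib)
  also have "(1 - c^2) powr (1/2) = sqrt (1 - c^2)" using c2 by (simp add: powr_half_sqrt)
  finally have e: "(\<sigma>^2 * \<sigma>^2 - (c * \<sigma>^2) * (c * \<sigma>^2)) powr ((2 * r + 1) / 2)
      = \<sigma> powr (4 * ((2 * r + 1) / 2)) * ((1 - c^2) powr r * sqrt (1 - c^2))" .
  have "\<sigma> powr (- 2 * (1 + r)) * \<sigma> powr (4 * ((2 * r + 1) / 2)) = \<sigma> powr (2 * r)"
  proof -
    have "- 2 * (1 + r) + 4 * ((2 * r + 1) / 2) = 2 * r" by (simp add: field_simps)
    then show ?thesis by (metis powr_add)
  qed
  then show ?thesis unfolding e CC_def
    by (simp add: field_simps)
qed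



lemma CC_pos: assumes "\<sigma> > 0" "c \<in> {-1<..<1}" shows "CC \<sigma> r c > 0"
proof -
  have c2: "c^2 < 1" using assms by (auto simp: abs_square_less_1 abs_less_iff)
  then show ?thesis unfolding CC_def using assms by simp
qed

lemma part2:
  fixes \<sigma> r :: real and M :: "real \<Rightarrow> 'a measure" and X Y :: "real \<Rightarrow> 'a \<Rightarrow> real"
  assumes \<sigma>_pos: "\<sigma> > 0" and r_pos: "r > 0"
    and gauss: "\<And>c. c \<in> {-1<..<1} \<Longrightarrow>
        distributed (M c) (lborel :: (real \<times> real) measure) (\<lambda>\<omega>. (X c \<omega>, Y c \<omega>))
          (\<lambda>p. ennreal (binormal_density \<sigma> c p))"
  shows "((\<lambda>c. (\<integral>\<omega>. (pos_part (X c \<omega>) * pos_part (Y c \<omega>)) powr r \<partial>(M c))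
              / (K_const r * \<sigma> powr (- 2 * (1 + r))
                 * (\<sigma>^2 * \<sigma>^2 - (c * \<sigma>^2) * (c * \<sigma>^2)) powr ((2 * r + 1) / 2)))
           \<longlongrightarrow> 1) (at_right (-1))"
proof -
  let ?J = "\<lambda>c. \<integral>p. hh r c p \<partial>lborel"
  have Jp: "?J (-1) > 0" using J_pos[OF r_pos] .
  have lim: "((\<lambda>c. ?J c / ?J (-1)) \<longlongrightarrow> ?J (-1) / ?J (-1)) (at_right (-1))"
    by (intro tendsto_divide J_lim r_pos tendsto_const) (use Jp in simp)
  have ev: "eventually (\<lambda>c. c \<in> {-1<..<1}) (at_right (-1::real))"
    by (rule eventually_at_right_real) simp
  have ev2: "eventually (\<lambda>c. ?J c / ?J (-1) = (\<integral>\<omega>. (pos_part (X c \<omega>) * pos_part (Y c \<omega>)) powr r \<partial>(M c))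
              / (K_const r * \<sigma> powr (- 2 * (1 + r))
                 * (\<sigma>^2 * \<sigma>^2 - (c * \<sigma>^2) * (c * \<sigma>^2)) powr ((2 * r + 1) / 2))) (at_right (-1))"
    using ev
  proof eventually_elim
    case (elim c)
    have CCp: "CC \<sigma> r c > 0" using CC_pos[OF \<sigma>_pos elim] .
    show ?case
      unfolding E2[OF \<sigma>_pos r_pos elim gauss[OF elim]] denom_eq[OF \<sigma>_pos elim] K_eq[OF r_pos]
      using CCp Jp by (simp add: field_simps)
  qed
  show ?thesis using tendsto_cong[OF ev2] lim Jp by simp
qed



lemma lim_aux: "((\<lambda>w::real. - (w^2 + 2) * exp (- (w^2) / 2) / 6) \<longlongrightarrow> 0) at_top"
proof -
  have "filterlim (\<lambda>w::real. (1/2) * w^2) at_top at_top"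
    by (intro filterlim_tendsto_pos_mult_at_top[OF tendsto_const] filterlim_pow_at_top filterlim_ident) auto
  then have y: "filterlim (\<lambda>w::real. w^2 / 2) at_top at_top" by simp
  have l1: "((\<lambda>w::real. (w^2/2)^1 / exp (w^2/2)) \<longlongrightarrow> 0) at_top"
    by (rule filterlim_compose[OF tendsto_power_div_exp_0 y])
  have l0: "((\<lambda>w::real. (w^2/2)^0 / exp (w^2/2)) \<longlongrightarrow> 0) at_top"
    by (rule filterlim_compose[OF tendsto_power_div_exp_0 y])
  have "((\<lambda>w::real. - (2 * ((w^2/2)^1 / exp (w^2/2)) + 2 * ((w^2/2)^0 / exp (w^2/2))) / 6) \<longlongrightarrow> - (2 * 0 + 2 * 0) / 6) at_top"
    by (intro tendsto_intros l1 l0) auto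
  moreover have "(\<lambda>w::real. - (2 * ((w^2/2)^1 / exp (w^2/2)) + 2 * ((w^2/2)^0 / exp (w^2/2))) / 6)
      = (\<lambda>w::real. - (w^2 + 2) * exp (- (w^2) / 2) / 6)"
    by (auto simp: fun_eq_iff exp_minus field_simps)
  ultimately show ?thesis by simp
qed

lemma inner_int:
  fixes w :: real
  shows "(\<integral>\<^sup>+u. ennreal (pos_part u * pos_part (w - u) * exp (- (w^2) / 2)) \<partial>lborel)
       = ennreal (w^3 / 6 * exp (- (w^2) / 2)) * indicator {0..} w"
proof (cases "w > 0")
  case False
  then have z: "\<And>u. pos_part u * pos_part (w - u) * exp (- (w^2) / 2) = 0" by (auto simp: pos_part_def)
  have l: "(\<integral>\<^sup>+u. ennreal (pos_part u * pos_part (w - u) * exp (- (w^2) / 2)) \<partial>lborel) = 0"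
    unfolding z by simp
  have r: "ennreal (w^3 / 6 * exp (- (w^2) / 2)) * indicator {0..} w = 0"
  proof (cases "w = 0")
    case True then show ?thesis by simp
  next
    case F: False then show ?thesis using False by (simp add: indicator_def)
  qed
  show ?thesis unfolding l r ..
next
  case True
  have "(\<integral>\<^sup>+u. ennreal (pos_part u * pos_part (w - u) * exp (- (w^2) / 2)) \<partial>lborel)
      = (\<integral>\<^sup>+u. ennreal (u * (w - u) * exp (- (w^2) / 2)) * indicator {0..w} u \<partial>lborel)"
    by (intro nn_integral_cong) (auto simp: pos_part_def indicator_def max_def)
  also have "\<dots> = ennreal (exp (- (w^2) / 2) * (w * w^2 / 2 - w^3 / 3) - exp (- (w^2) / 2) * (w * 0^2 / 2 - 0^3 / 3))"
    by (rule nn_integral_FTC_Icc[where F="\<lambda>u. exp (- (w^2) / 2) * (w * u^2 / 2 - u^3 / 3)"])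
       (use True in \<open>auto intro!: derivative_eq_intros mult_left_mono mult_right_mono simp: power2_eq_square algebra_simps\<close>)
  also have "\<dots> = ennreal (w^3 / 6 * exp (- (w^2) / 2)) * indicator {0..} w"
    using True by (simp add: power2_eq_square power3_eq_cube field_simps)
  finally show ?thesis .
qed

lemma J1: "(\<integral>p. hh 1 (-1) p \<partial>lborel) = 1 / 3"
proof -
  have m[measurable]: "(\<lambda>q::real\<times>real. ennreal (pos_part (fst q) * pos_part (snd q - fst q) * exp (- ((snd q)^2) / 2))) \<in> borel_measurable borel"
    by measurable
  have "(\<integral>\<^sup>+p. ennreal (hh 1 (-1) p) \<partial>lborel)
     = ennreal (\<bar>1\<bar> * \<bar>1\<bar>) * (\<integral>\<^sup>+q. ennreal (hh 1 (-1) (1 * fst q, (-1) * fst q + 1 * snd q)) \<partial>lborel)"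
    by (rule lin_subst_nn) auto
  also have "\<dots> = (\<integral>\<^sup>+q. ennreal (pos_part (fst q) * pos_part (snd q - fst q) * exp (- ((snd q)^2) / 2)) \<partial>(lborel \<Otimes>\<^sub>M lborel))"
  proof -
    have "hh 1 (-1) (1 * fst q, (-1) * fst q + 1 * snd q) = pos_part (fst q) * pos_part (snd q - fst q) * exp (- ((snd q)^2) / 2)" for q :: "real \<times> real"
    proof -
      have "(fst q)^2 - 2 * (-1) * fst q * (snd q - fst q) + (snd q - fst q)^2 = (snd q)^2"
        by (simp add: power2_eq_square algebra_simps)
      moreover have "0 \<le> pos_part (fst q) * pos_part (snd q - fst q)"
        by (simp add: pos_part_nonneg)
      ultimately show ?thesis unfolding hh_def by simp
    qed
    then show ?thesis by (simp add: lborel_prod)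
  qed
  also have "\<dots> = (\<integral>\<^sup>+w. \<integral>\<^sup>+u. ennreal (pos_part u * pos_part (w - u) * exp (- (w^2) / 2)) \<partial>lborel \<partial>lborel)"
    using lborel_pair.nn_integral_snd[symmetric, of "\<lambda>q. ennreal (pos_part (fst q) * pos_part (snd q - fst q) * exp (- ((snd q)^2) / 2))"]
    by (simp add: lborel_prod)
  also have "\<dots> = (\<integral>\<^sup>+w. ennreal (w^3 / 6 * exp (- (w^2) / 2)) * indicator {0..} w \<partial>lborel)"
    by (intro nn_integral_cong inner_int)
  also have "\<dots> = ennreal (0 - (- (0^2 + 2) * exp (- (0^2) / 2) / 6))"
    by (rule nn_integral_FTC_atLeast[where F="\<lambda>w::real. - (w^2 + 2) * exp (- (w^2) / 2) / 6", OF _ _ _ lim_aux])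
       (auto intro!: derivative_eq_intros simp: power2_eq_square power3_eq_cube field_simps)
  also have "\<dots> = ennreal (1/3)" by simp
  finally have "(\<integral>\<^sup>+p. ennreal (hh 1 (-1) p) \<partial>lborel) = ennreal (1/3)" .
  then show ?thesis
    by (subst integral_eq_nn_integral) (auto simp: hh_nonneg measurable_lborel1)
qed

lemma part3: "K_const 1 = 1 / (6 * pi)"
  by (simp add: K_eq J1)



definition kk :: "real \<Rightarrow> real \<times> real \<Rightarrow> real" where
  "kk c p = pos_part (fst p) * neg_part (c * fst p + sqrt (1 - c^2) * snd p) * exp (- ((fst p)^2 + (snd p)^2) / 2)"

lemma kk_meas[measurable]: "kk c \<in> borel_measurable borel"
  unfolding kk_def by measurable

lemma kk_nonneg: "0 \<le> kk c p"
  unfolding kk_def by (simp add: pos_part_nonneg neg_part_nonneg)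

lemma pw4:
  assumes \<sigma>: "\<sigma> > 0" and c: "c \<in> {-1<..<1}"
  shows "\<bar>\<sigma>\<bar> * \<bar>\<sigma> * sqrt (1 - c^2)\<bar> *
     (binormal_density \<sigma> c (\<sigma> * u, \<sigma> * c * u + \<sigma> * sqrt (1 - c^2) * w) *
      (pos_part (\<sigma> * u) * neg_part (\<sigma> * c * u + \<sigma> * sqrt (1 - c^2) * w)))
   = \<sigma>^2 / (2 * pi) * kk c (u, w)"
proof -
  define s where "s = sqrt (1 - c^2)"
  have c2: "c^2 < 1" using c by (auto simp: abs_square_less_1 abs_less_iff)
  have s: "s > 0" unfolding s_def using c2 by simp
  have ss: "s * s = 1 - c^2" unfolding s_def using c2 by simp
  define z where "z = c * u + s * w"
  have yz: "\<sigma> * c * u + \<sigma> * s * w = \<sigma> * z" unfolding z_def by (simp add: algebra_simps)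
  have num: "(\<sigma> * u)^2 - 2 * c * (\<sigma> * u) * (\<sigma> * z) + (\<sigma> * z)^2 = (\<sigma>^2 * (1 - c^2)) * (u^2 + w^2)"
  proof -
    have "(\<sigma> * u)^2 - 2 * c * (\<sigma> * u) * (\<sigma> * z) + (\<sigma> * z)^2 = \<sigma>^2 * ((1 - c^2) * u^2 + (s * s) * w^2)"
      unfolding z_def by (simp add: power2_eq_square algebra_simps)
    then show ?thesis unfolding ss by (simp add: algebra_simps)
  qed
  have e3: "- ((\<sigma> * u)^2 - 2 * c * (\<sigma> * u) * (\<sigma> * z) + (\<sigma> * z)^2) / (2 * \<sigma>^2 * (1 - c^2))
       = - (u^2 + w^2) / 2"
    unfolding num using \<sigma> c2 by (simp add: field_simps)
  have e4: "binormal_density \<sigma> c (\<sigma> * u, \<sigma> * z) = exp (- (u^2 + w^2) / 2) / (2 * pi * \<sigma>^2 * s)"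
    unfolding binormal_density_def prod.case e3 s_def[symmetric] ..
  have fin: "\<sigma> * (\<sigma> * s) * (binormal_density \<sigma> c (\<sigma> * u, \<sigma> * z) * (pos_part (\<sigma> * u) * neg_part (\<sigma> * z)))
     = \<sigma>^2 / (2 * pi) * kk c (u, w)"
    unfolding e4 pos_part_scale[OF \<sigma>] neg_part_scale[OF \<sigma>] kk_def z_def[symmetric] s_def[symmetric] fst_conv snd_conv
    using \<sigma> s by (simp add: field_simps power2_eq_square)
  show ?thesis unfolding s_def[symmetric] yz using fin \<sigma> s by simp
qed

lemma E4:
  assumes \<sigma>: "\<sigma> > 0" and c: "c \<in> {-1<..<1}"
    and d: "distributed M (lborel :: (real \<times> real) measure) (\<lambda>\<omega>. (X \<omega>, Y \<omega>)) (\<lambda>p. ennreal (binormal_density \<sigma> c p))"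
  shows "(\<integral>\<omega>. pos_part (X \<omega>) * neg_part (Y \<omega>) \<partial>M) = \<sigma>^2 / (2 * pi) * (\<integral>p. kk c p \<partial>lborel)"
proof -
  define s where "s = sqrt (1 - c^2)"
  have c2: "c^2 < 1" using c by (auto simp: abs_square_less_1 abs_less_iff)
  have s: "s > 0" unfolding s_def using c2 by simp
  define G where "G = (\<lambda>p::real\<times>real. pos_part (fst p) * neg_part (snd p))"
  have Gm[measurable]: "G \<in> borel_measurable borel" unfolding G_def by measurable
  have Gn: "\<And>p. 0 \<le> G p" unfolding G_def by (simp add: pos_part_nonneg neg_part_nonneg)
  have Cn: "0 \<le> \<sigma>^2 / (2 * pi)" by simp
  have "(\<integral>\<omega>. pos_part (X \<omega>) * neg_part (Y \<omega>) \<partial>M) = (\<integral>\<omega>. G (X \<omega>, Y \<omega>) \<partial>M)"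
    unfolding G_def by simp
  also have "\<dots> = enn2real (\<integral>\<^sup>+p. ennreal (binormal_density \<sigma> c p * G p) \<partial>lborel)"
    by (rule E_as_nn[OF d Gm Gn c])
  also have "(\<integral>\<^sup>+p. ennreal (binormal_density \<sigma> c p * G p) \<partial>lborel)
     = ennreal (\<bar>\<sigma>\<bar> * \<bar>\<sigma> * s\<bar>) * (\<integral>\<^sup>+q. ennreal (binormal_density \<sigma> c (\<sigma> * fst q, \<sigma> * c * fst q + \<sigma> * s * snd q) * G (\<sigma> * fst q, \<sigma> * c * fst q + \<sigma> * s * snd q)) \<partial>lborel)"
    by (rule lin_subst_nn) (use \<sigma> s in auto)
  also have "\<dots> = (\<integral>\<^sup>+q. ennreal (\<bar>\<sigma>\<bar> * \<bar>\<sigma> * s\<bar> * (binormal_density \<sigma> c (\<sigma> * fst q, \<sigma> * c * fst q + \<sigma> * s * snd q) * G (\<sigma> * fst q, \<sigma> * c * fst q + \<sigma> * s * snd q))) \<partial>lborel)"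
    by (subst nn_integral_cmult[symmetric]) (auto simp: ennreal_mult[symmetric] binormal_nonneg[OF c] Gn)
  also have "\<dots> = (\<integral>\<^sup>+q. ennreal (\<sigma>^2 / (2 * pi) * kk c q) \<partial>lborel)"
  proof (rule nn_integral_cong)
    fix q :: "real \<times> real"
    obtain u w where q: "q = (u, w)" by (cases q)
    show "ennreal (\<bar>\<sigma>\<bar> * \<bar>\<sigma> * s\<bar> * (binormal_density \<sigma> c (\<sigma> * fst q, \<sigma> * c * fst q + \<sigma> * s * snd q) * G (\<sigma> * fst q, \<sigma> * c * fst q + \<sigma> * s * snd q))) = ennreal (\<sigma>^2 / (2 * pi) * kk c q)"
      unfolding q s_def G_def fst_conv snd_conv using pw4[OF \<sigma> c, of u w] by simp
  qed
  also have "\<dots> = ennreal (\<sigma>^2 / (2 * pi)) * (\<integral>\<^sup>+q. ennreal (kk c q) \<partial>lborel)"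
  proof -
    have eq: "\<And>q. ennreal (\<sigma>^2 / (2 * pi) * kk c q) = ennreal (\<sigma>^2 / (2 * pi)) * ennreal (kk c q)"
      by (rule ennreal_mult[OF Cn kk_nonneg])
    show ?thesis unfolding eq by (rule nn_integral_cmult) (simp add: measurable_lborel1)
  qed
  finally have "(\<integral>\<omega>. pos_part (X \<omega>) * neg_part (Y \<omega>) \<partial>M) = \<sigma>^2 / (2 * pi) * enn2real (\<integral>\<^sup>+q. ennreal (kk c q) \<partial>lborel)"
    using Cn by (simp add: enn2real_mult)
  also have "enn2real (\<integral>\<^sup>+q. ennreal (kk c q) \<partial>lborel) = (\<integral>p. kk c p \<partial>lborel)"
    by (rule integral_eq_nn_integral[symmetric]) (auto simp: kk_nonneg measurable_lborel1)
  finally show ?thesis .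
qed



lemma abs_gauss_integrable: "integrable lborel (\<lambda>u::real. \<bar>u\<bar> ^ k * exp (- (u^2) / 2))"
proof -
  have "integrable lborel (\<lambda>u. sqrt (2 * pi) * (std_normal_density u * \<bar>u\<bar> ^ k))"
    by (intro integrable_mult_right integrable_std_normal_moment_abs)
  moreover have "(\<lambda>u. sqrt (2 * pi) * (std_normal_density u * \<bar>u\<bar> ^ k)) = (\<lambda>u::real. \<bar>u\<bar> ^ k * exp (- (u^2) / 2))"
    by (simp add: std_normal_density_def fun_eq_iff)
  ultimately show ?thesis by simp
qed

definition WW :: "real \<times> real \<Rightarrow> real" where
  "WW p = (\<bar>fst p\<bar> ^ 2 * exp (- ((fst p)^2) / 2)) * (\<bar>snd p\<bar> ^ 0 * exp (- ((snd p)^2) / 2))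
        + (\<bar>fst p\<bar> ^ 1 * exp (- ((fst p)^2) / 2)) * (\<bar>snd p\<bar> ^ 1 * exp (- ((snd p)^2) / 2))"

lemma WW_integrable: "integrable lborel WW"
proof -
  note a = integrable_prod[OF abs_gauss_integrable[of 2] abs_gauss_integrable[of 0]]
  note b = integrable_prod[OF abs_gauss_integrable[of 1] abs_gauss_integrable[of 1]]
  show ?thesis unfolding WW_def
    by (rule Bochner_Integration.integrable_add) (use a b in simp_all)
qed

lemma kk_bound:
  assumes c: "c \<in> {-1<..<1}"
  shows "\<bar>kk c p\<bar> \<le> WW p"
proof -
  obtain u w where p: "p = (u, w)" by (cases p)
  have c2: "c^2 < 1" using c by (auto simp: abs_square_less_1 abs_less_iff)
  have s1: "sqrt (1 - c^2) \<le> 1" using c2 by simp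
  have s0: "0 \<le> sqrt (1 - c^2)" using c2 by simp
  have "neg_part (c * u + sqrt (1 - c^2) * w) \<le> \<bar>c * u + sqrt (1 - c^2) * w\<bar>"
    by (simp add: neg_part_def)
  also have "\<dots> \<le> \<bar>c\<bar> * \<bar>u\<bar> + sqrt (1 - c^2) * \<bar>w\<bar>"
    using s0 abs_triangle_ineq[of "c * u" "sqrt (1 - c^2) * w"] by (simp add: abs_mult)
  also have "\<dots> \<le> \<bar>u\<bar> + \<bar>w\<bar>"
  proof (intro add_mono)
    show "\<bar>c\<bar> * \<bar>u\<bar> \<le> \<bar>u\<bar>" using c by (intro mult_left_le_one_le) auto
    show "sqrt (1 - c^2) * \<bar>w\<bar> \<le> \<bar>w\<bar>" using s0 s1 by (intro mult_left_le_one_le) auto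
  qed
  finally have nb: "neg_part (c * u + sqrt (1 - c^2) * w) \<le> \<bar>u\<bar> + \<bar>w\<bar>" .
  have pb: "pos_part u \<le> \<bar>u\<bar>" by (simp add: pos_part_def)
  have "kk c p = pos_part u * neg_part (c * u + sqrt (1 - c^2) * w) * exp (- (u^2 + w^2) / 2)"
    unfolding kk_def p by simp
  also have "\<dots> \<le> \<bar>u\<bar> * (\<bar>u\<bar> + \<bar>w\<bar>) * exp (- (u^2 + w^2) / 2)"
    by (intro mult_right_mono mult_mono pb nb) (auto simp: pos_part_nonneg neg_part_nonneg)
  also have "\<dots> = WW p"
  proof -
    have "exp (- (u^2 + w^2) / 2) = exp (- (u^2) / 2) * exp (- (w^2) / 2)"
      by (simp add: field_simps flip: exp_add)
    then show ?thesis unfolding WW_def p by (simp add: algebra_simps power2_eq_square)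
  qed
  finally show ?thesis using kk_nonneg[of c p] by simp
qed

lemma L_lim: "((\<lambda>c. \<integral>p. kk c p \<partial>lborel) \<longlongrightarrow> (\<integral>p. kk (-1) p \<partial>lborel)) (at_right (-1))"
proof (rule dc_at_right[where b=0 and w=WW])
  show "integrable lborel WW" by (rule WW_integrable)
  show "\<And>t. t \<in> {- 1<..<0} \<Longrightarrow> kk t \<in> borel_measurable lborel" by (simp add: measurable_lborel1)
  show "kk (- 1) \<in> borel_measurable lborel" by (simp add: measurable_lborel1)
  show "((\<lambda>t. kk t x) \<longlongrightarrow> kk (- 1) x) (at_right (- 1))" for x
    unfolding kk_def neg_part_def
    by (intro tendsto_intros tendsto_min tendsto_minus tendsto_mult tendsto_add tendsto_const
        tendsto_ident_at tendsto_real_sqrt tendsto_diff tendsto_power)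
  show "\<bar>kk t x\<bar> \<le> WW x" if "t \<in> {- 1<..<0}" for t x
    using kk_bound[of t x] that by auto
qed simp



lemma gauss_int: "(\<integral>w. exp (- (w^2) / 2) \<partial>lborel) = sqrt (2 * pi)"
proof -
  have "(\<integral>w. exp (- (w^2) / 2) \<partial>lborel) = (\<integral>w. sqrt (2 * pi) * std_normal_density w \<partial>lborel)"
    by (simp add: std_normal_density_def)
  also have "\<dots> = sqrt (2 * pi)" by simp
  finally show ?thesis .
qed

lemma half_moment: "(\<integral>u. (pos_part u)^2 * exp (- (u^2) / 2) \<partial>lborel) = sqrt (2 * pi) / 2"
proof -
  let ?P = "\<integral>u. (pos_part u)^2 * exp (- (u^2) / 2) \<partial>lborel"
  let ?N = "\<integral>u. (neg_part u)^2 * exp (- (u^2) / 2) \<partial>lborel"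
  have ip: "integrable lborel (\<lambda>u::real. (pos_part u)^2 * exp (- (u^2) / 2))"
  proof (rule Bochner_Integration.integrable_bound[OF abs_gauss_integrable[of 2]])
    show "(\<lambda>u::real. (pos_part u)^2 * exp (- (u^2) / 2)) \<in> borel_measurable lborel"
      by (simp add: measurable_lborel1)
    show "AE x in lborel. norm ((pos_part x)^2 * exp (- (x^2) / 2)) \<le> norm (\<bar>x\<bar> ^ 2 * exp (- (x^2) / 2))"
      by (intro AE_I2) (auto simp: pos_part_def max_def)
  qed
  have inn: "integrable lborel (\<lambda>u::real. (neg_part u)^2 * exp (- (u^2) / 2))"
  proof (rule Bochner_Integration.integrable_bound[OF abs_gauss_integrable[of 2]])
    show "(\<lambda>u::real. (neg_part u)^2 * exp (- (u^2) / 2)) \<in> borel_measurable lborel"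
      by (simp add: measurable_lborel1)
    show "AE x in lborel. norm ((neg_part x)^2 * exp (- (x^2) / 2)) \<le> norm (\<bar>x\<bar> ^ 2 * exp (- (x^2) / 2))"
      by (intro AE_I2) (auto simp: neg_part_def min_def)
  qed
  have "?P = \<bar>-1\<bar> *\<^sub>R (\<integral>u. (pos_part (0 + -1 * u))^2 * exp (- ((0 + -1 * u)^2) / 2) \<partial>lborel)"
    by (rule lborel_integral_real_affine) simp
  also have "\<dots> = ?N"
    by (simp, intro Bochner_Integration.integral_cong) (auto simp: pos_part_def neg_part_def max_def min_def)
  finally have PN: "?P = ?N" .
  have "?P + ?N = (\<integral>u. (pos_part u)^2 * exp (- (u^2) / 2) + (neg_part u)^2 * exp (- (u^2) / 2) \<partial>lborel)"
    by (rule Bochner_Integration.integral_add[OF ip inn, symmetric])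
  also have "\<dots> = (\<integral>u. sqrt (2 * pi) * (std_normal_density u * u^(2*1)) \<partial>lborel)"
    by (intro Bochner_Integration.integral_cong)
       (auto simp: std_normal_density_def pos_part_def neg_part_def max_def min_def algebra_simps power2_eq_square)
  also have "\<dots> = sqrt (2 * pi)"
  proof -
    have "(\<integral>u. std_normal_density u * u^(2*1) \<partial>lborel) = 1"
      using integral_std_normal_moment_even[of 1] by (simp only:) simp
    then show ?thesis by simp
  qed
  finally show ?thesis using PN by simp
qed

lemma L_at: "(\<integral>p. kk (-1) p \<partial>lborel) = pi"
proof -
  have ip: "integrable lborel (\<lambda>u::real. (pos_part u)^2 * exp (- (u^2) / 2))"
  proof (rule Bochner_Integration.integrable_bound[OF abs_gauss_integrable[of 2]])
    show "(\<lambda>u::real. (pos_part u)^2 * exp (- (u^2) / 2)) \<in> borel_measurable lborel"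
      by (simp add: measurable_lborel1)
    show "AE x in lborel. norm ((pos_part x)^2 * exp (- (x^2) / 2)) \<le> norm (\<bar>x\<bar> ^ 2 * exp (- (x^2) / 2))"
      by (intro AE_I2) (auto simp: pos_part_def max_def)
  qed
  have ig: "integrable lborel (\<lambda>u::real. exp (- (u^2) / 2))"
    using abs_gauss_integrable[of 0] by simp
  have "kk (-1) p = (pos_part (fst p))^2 * exp (- ((fst p)^2) / 2) * exp (- ((snd p)^2) / 2)" for p
  proof -
    have "neg_part (- fst p) = pos_part (fst p)" by (simp add: pos_part_def neg_part_def max_def min_def)
    moreover have "exp (- ((fst p)^2 + (snd p)^2) / 2) = exp (- ((fst p)^2) / 2) * exp (- ((snd p)^2) / 2)"
      by (simp add: field_simps flip: exp_add)
    ultimately show ?thesis unfolding kk_def by (simp add: power2_eq_square)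
  qed
  then have "(\<integral>p. kk (-1) p \<partial>lborel) = (\<integral>p. (pos_part (fst p))^2 * exp (- ((fst p)^2) / 2) * exp (- ((snd p)^2) / 2) \<partial>lborel)"
    by simp
  also have "\<dots> = (\<integral>u. (pos_part u)^2 * exp (- (u^2) / 2) \<partial>lborel) * (\<integral>w. exp (- (w^2) / 2) \<partial>lborel)"
    by (rule integral_prod[OF ip ig]) auto
  also have "\<dots> = pi"
    unfolding half_moment gauss_int by (simp add: real_sqrt_mult[symmetric])
  finally show ?thesis .
qed

lemma part4:
  fixes \<sigma> :: real and M :: "real \<Rightarrow> 'a measure" and X Y :: "real \<Rightarrow> 'a \<Rightarrow> real"
  assumes \<sigma>_pos: "\<sigma> > 0"
    and gauss: "\<And>c. c \<in> {-1<..<1} \<Longrightarrow>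
        distributed (M c) (lborel :: (real \<times> real) measure) (\<lambda>\<omega>. (X c \<omega>, Y c \<omega>))
          (\<lambda>p. ennreal (binormal_density \<sigma> c p))"
  shows "((\<lambda>c. (\<integral>\<omega>. pos_part (X c \<omega>) * neg_part (Y c \<omega>) \<partial>(M c)) / (\<sigma>^2 / 2))
           \<longlongrightarrow> 1) (at_right (-1))"
proof -
  let ?L = "\<lambda>c. \<integral>p. kk c p \<partial>lborel"
  have lim: "((\<lambda>c. ?L c / pi) \<longlongrightarrow> pi / pi) (at_right (-1))"
    using L_lim unfolding L_at by (intro tendsto_divide tendsto_const) auto
  have ev: "eventually (\<lambda>c. c \<in> {-1<..<1}) (at_right (-1::real))"
    by (rule eventually_at_right_real) simp
  have ev2: "eventually (\<lambda>c. ?L c / pi = (\<integral>\<omega>. pos_part (X c \<omega>) * neg_part (Y c \<omega>) \<partial>(M c)) / (\<sigma>^2 / 2)) (at_right (-1))"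
    using ev
  proof eventually_elim
    case (elim c)
    show ?case unfolding E4[OF \<sigma>_pos elim gauss[OF elim]] using \<sigma>_pos by (simp add: field_simps)
  qed
  show ?thesis using tendsto_cong[OF ev2] lim by simp
qed

theorem lemma6:
  fixes \<sigma> r :: real
    and M :: "real \<Rightarrow> 'a measure"
    and X Y :: "real \<Rightarrow> 'a \<Rightarrow> real"
  assumes \<sigma>_pos: "\<sigma> > 0"
    and r_pos: "r > 0"
    and prob: "\<And>c. c \<in> {-1<..<1} \<Longrightarrow> prob_space (M c)"
    and gauss: "\<And>c. c \<in> {-1<..<1} \<Longrightarrow>
        distributed (M c) (lborel :: (real \<times> real) measure) (\<lambda>\<omega>. (X c \<omega>, Y c \<omega>))
          (\<lambda>p. ennreal (binormal_density \<sigma> c p))"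
  shows "set_integrable (lborel :: (real \<times> real) measure) ({0<..} \<times> {0<..})
           (\<lambda>p. (fst p) powr r * (snd p) powr r * exp (- ((fst p + snd p)^2) / 2))
       \<and> ((\<lambda>c. (\<integral>\<omega>. (pos_part (X c \<omega>) * pos_part (Y c \<omega>)) powr r \<partial>(M c))
              / (K_const r * \<sigma> powr (- 2 * (1 + r))
                 * (\<sigma>^2 * \<sigma>^2 - (c * \<sigma>^2) * (c * \<sigma>^2)) powr ((2 * r + 1) / 2)))
           \<longlongrightarrow> 1) (at_right (-1))
       \<and> K_const 1 = 1 / (6 * pi)
       \<and> ((\<lambda>c. (\<integral>\<omega>. pos_part (X c \<omega>) * neg_part (Y c \<omega>) \<partial>(M c)) / (\<sigma>^2 / 2))
           \<longlongrightarrow> 1) (at_right (-1))"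
  using part1[OF r_pos] part2[OF \<sigma>_pos r_pos gauss] part3 part4[OF \<sigma>_pos gauss] by blast

end
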